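(* Let $f:\mathbb{R}^n\to\mathbb{R}$ be differentiable, $\mu$-strongly convex, with $L$-Lipschitz gradient $\nabla f$, and let $x^*$ be its unique minimizer. Given $\varepsilon>0$, suppose $\alpha<\left(\frac{4\varepsilon\mu}{L^2n}\right)^{1/2}$. Let $\mathcal{E}^t$ denote the event $\|\nabla f(x^t)\|_\infty\le\eta$. If $x\in\mathbb{R}^n$ satisfies $f(x)-f(x^* )>\varepsilon$, then the iterate $x^{t+1}$ of Markov gradient descent satisfies $$\mathbb{E}\left[f(x^{t+1})\,\middle|\,x^t=x,\mathcal{E}^t\right]<f(x).$$
   Context: A differentiable $f$ is $\mu$-strongly convex if $\langle\nabla f(x)-\nabla f(y),x-y\rangle\ge\mu\|x-y\|_2^2$ for all $x,y$. Markov gradient descent (MGD) with lattice resolution $\alpha>0$ and normalizer $\eta>0$: start at $x^0\in\alpha\mathbb{Z}^n$; at step $t$, for each coordinate $i$, conditionally on $x^t$, $\Delta^t_i\in\{0,1\}$ is Bernoulli with $\mathbb{P}[\Delta^t_i=1\mid x^t]=\min(|\partial_i f(x^t)|/\eta,1)$, and $x^{t+1}_i=x^t_i-\alpha\,\mathrm{sgn}(\partial_i f(x^t))\Delta^t_i$. *)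

theory Defs
  imports "HOL-Analysis.Analysis" "HOL-Probability.Probability"
begin

definition mgd_step :: "(real^'n \<Rightarrow> real^'n) \<Rightarrow> real \<Rightarrow> real \<Rightarrow> real^'n \<Rightarrow> (real^'n) pmf" where
  "mgd_step grad \<alpha> \<eta> x =
     map_pmf (\<lambda>\<Delta>. \<chi> i. x $ i - \<alpha> * sgn (grad x $ i) * (if \<Delta> i then 1 else 0))
       (Pi_pmf UNIV False (\<lambda>i. bernoulli_pmf (min (\<bar>grad x $ i\<bar> / \<eta>) 1)))"

end

theory Submission imports Defs begin

lemma line_deriv:
  fixes f :: "real^'n \<Rightarrow> real"
  assumes grad: "\<And>y. (f has_derivative (\<lambda>h. grad y \<bullet> h)) (at y)"
  shows "((\<lambda>t. f (x + t *\<^sub>R d)) has_real_derivative (grad (x + t *\<^sub>R d) \<bullet> d)) (at t)"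
proof -
  have "((\<lambda>t. x + t *\<^sub>R d) has_derivative (\<lambda>h. h *\<^sub>R d)) (at t)"
    by (auto intro!: derivative_eq_intros)
  from has_derivative_compose[OF this grad]
  have "((\<lambda>t. f (x + t *\<^sub>R d)) has_derivative (\<lambda>h. grad (x + t *\<^sub>R d) \<bullet> (h *\<^sub>R d))) (at t)" .
  moreover have "(\<lambda>h. grad (x + t *\<^sub>R d) \<bullet> (h *\<^sub>R d)) = (*) (grad (x + t *\<^sub>R d) \<bullet> d)"
    by (rule ext) simp
  ultimately show ?thesis unfolding has_field_derivative_def by simp
qed

lemma descent:
  fixes f :: "real^'n \<Rightarrow> real"
  assumes grad: "\<And>y. (f has_derivative (\<lambda>h. grad y \<bullet> h)) (at y)"
    and lipschitz: "\<And>y z. norm (grad y - grad z) \<le> L * norm (y - z)"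
  shows "f y \<le> f x + grad x \<bullet> (y - x) + L / 2 * (norm (y - x))\<^sup>2"
proof -
  define d where "d = y - x"
  define \<phi> where "\<phi> t = f (x + t *\<^sub>R d) - t * (grad x \<bullet> d) - L / 2 * t\<^sup>2 * (norm d)\<^sup>2" for t
  have "\<phi> 1 \<le> \<phi> 0"
  proof (rule DERIV_nonpos_imp_nonincreasing[of 0 1])
    fix t :: real assume t: "0 \<le> t" "t \<le> 1"
    have D: "(\<phi> has_real_derivative (grad (x + t *\<^sub>R d) \<bullet> d - grad x \<bullet> d - L * t * (norm d)\<^sup>2)) (at t)"
      unfolding \<phi>_def
      by (rule line_deriv[OF grad] derivative_eq_intros refl | simp)+
    have "(grad (x + t *\<^sub>R d) - grad x) \<bullet> d \<le> norm (grad (x + t *\<^sub>R d) - grad x) * norm d"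
      by (rule norm_cauchy_schwarz)
    also have "\<dots> \<le> L * norm (t *\<^sub>R d) * norm d"
      using lipschitz[of "x + t *\<^sub>R d" x] by (simp add: mult_right_mono)
    also have "\<dots> = L * t * (norm d)\<^sup>2" using t by (simp add: power2_eq_square)
    finally have "grad (x + t *\<^sub>R d) \<bullet> d - grad x \<bullet> d - L * t * (norm d)\<^sup>2 \<le> 0"
      by (simp add: inner_diff_left)
    with D show "\<exists>y. (\<phi> has_real_derivative y) (at t) \<and> y \<le> 0" by blast
  qed simp
  then show ?thesis unfolding \<phi>_def d_def by simp
qed

lemma sc_lower:
  fixes f :: "real^'n \<Rightarrow> real"
  assumes grad: "\<And>y. (f has_derivative (\<lambda>h. grad y \<bullet> h)) (at y)"
    and strongly_convex: "\<And>y z. (grad y - grad z) \<bullet> (y - z) \<ge> \<mu> * (norm (y - z))\<^sup>2"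
  shows "f y \<ge> f x + grad x \<bullet> (y - x) + \<mu> / 2 * (norm (y - x))\<^sup>2"
proof -
  define d where "d = y - x"
  define \<phi> where "\<phi> t = f (x + t *\<^sub>R d) - t * (grad x \<bullet> d) - \<mu> / 2 * t\<^sup>2 * (norm d)\<^sup>2" for t
  have "\<phi> 0 \<le> \<phi> 1"
  proof (rule DERIV_nonneg_imp_nondecreasing[of 0 1])
    fix t :: real assume t: "0 \<le> t" "t \<le> 1"
    have D: "(\<phi> has_real_derivative (grad (x + t *\<^sub>R d) \<bullet> d - grad x \<bullet> d - \<mu> * t * (norm d)\<^sup>2)) (at t)"
      unfolding \<phi>_def
      by (rule line_deriv[OF grad] derivative_eq_intros refl | simp)+
    have "0 \<le> grad (x + t *\<^sub>R d) \<bullet> d - grad x \<bullet> d - \<mu> * t * (norm d)\<^sup>2"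
    proof (cases "t = 0")
      case False
      have "t * (\<mu> * t * (norm d)\<^sup>2) = \<mu> * (norm (t *\<^sub>R d))\<^sup>2"
        using t by (simp add: power2_eq_square)
      also have "\<dots> \<le> (grad (x + t *\<^sub>R d) - grad x) \<bullet> (t *\<^sub>R d)"
        using strongly_convex[of "x + t *\<^sub>R d" x] by simp
      also have "\<dots> = t * ((grad (x + t *\<^sub>R d) - grad x) \<bullet> d)" by simp
      finally have "\<mu> * t * (norm d)\<^sup>2 \<le> (grad (x + t *\<^sub>R d) - grad x) \<bullet> d"
        using t False by (simp add: mult_le_cancel_left)
      then show ?thesis by (simp add: inner_diff_left)
    qed simp
    with D show "\<exists>y. (\<phi> has_real_derivative y) (at t) \<and> 0 \<le> y" by blast
  qed simp
  then show ?thesis unfolding \<phi>_def d_def by simp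
qed

theorem corollary6p3:
  fixes f :: "real^'n \<Rightarrow> real" and grad :: "real^'n \<Rightarrow> real^'n"
    and \<mu> L \<epsilon> \<alpha> \<eta> :: real and xstar x :: "real^'n"
  assumes grad: "\<And>y. (f has_derivative (\<lambda>h. grad y \<bullet> h)) (at y)"
    and mu_pos: "\<mu> > 0"
    and strongly_convex: "\<And>y z. (grad y - grad z) \<bullet> (y - z) \<ge> \<mu> * (norm (y - z))\<^sup>2"
    and lipschitz: "\<And>y z. norm (grad y - grad z) \<le> L * norm (y - z)"
    and minimizer: "\<And>y. f xstar \<le> f y"
    and eps_pos: "\<epsilon> > 0"
    and alpha_pos: "\<alpha> > 0"
    and eta_pos: "\<eta> > 0"
    and alpha_small: "\<alpha> < sqrt (4 * \<epsilon> * \<mu> / (L\<^sup>2 * real CARD('n)))"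
    and event: "\<And>i. \<bar>grad x $ i\<bar> \<le> \<eta>"
    and gap: "f x - f xstar > \<epsilon>"
  shows "measure_pmf.expectation (mgd_step grad \<alpha> \<eta> x) f < f x"
proof -
  define g where "g = grad x"
  define n where "n = real CARD('n)"
  define p where "p i = min (\<bar>g $ i\<bar> / \<eta>) 1" for i
  have p_eq: "p i = \<bar>g $ i\<bar> / \<eta>" for i
    using event[of i] eta_pos by (simp add: p_def g_def)
  have p01: "0 \<le> p i" "p i \<le> 1" for i unfolding p_def using eta_pos by auto
  define h where "h \<Delta> = (\<chi> i. x $ i - \<alpha> * sgn (g $ i) * (if \<Delta> i then 1 else 0))" for \<Delta> :: "'n \<Rightarrow> bool"
  define P where "P = Pi_pmf (UNIV :: 'n set) False (\<lambda>i. bernoulli_pmf (p i))"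
  define c where "c i b = (if b then - \<alpha> * \<bar>g $ i\<bar> + L * \<alpha>\<^sup>2 / 2 else 0)" for i b
  have n_pos: "n > 0" unfolding n_def by simp
  have L_nonneg: "L \<ge> 0"
  proof -
    let ?v = "(\<chi> i. 1) :: real^'n"
    have "?v \<noteq> 0" by (metis vec_lambda_beta zero_index zero_neq_one)
    hence nv: "norm ?v > 0" by simp
    have "0 \<le> L * norm (?v - 0)" using lipschitz[of ?v 0] norm_ge_zero order_trans by blast
    with nv show ?thesis by (simp add: zero_le_mult_iff)
  qed
  have L_pos: "L > 0"
  proof (rule ccontr)
    assume "\<not> L > 0" hence "L = 0" using L_nonneg by simp
    with alpha_small alpha_pos show False by simp
  qed
  have a2: "\<alpha>\<^sup>2 < 4 * \<epsilon> * \<mu> / (L\<^sup>2 * n)"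
  proof -
    have "\<alpha>\<^sup>2 < (sqrt (4 * \<epsilon> * \<mu> / (L\<^sup>2 * n)))\<^sup>2"
      using alpha_small alpha_pos unfolding n_def by (intro power_strict_mono) auto
    also have "\<dots> = 4 * \<epsilon> * \<mu> / (L\<^sup>2 * n)"
      using eps_pos mu_pos n_pos L_pos by (intro real_sqrt_pow2) auto
    finally show ?thesis .
  qed
  hence a2': "L\<^sup>2 * n * \<alpha>\<^sup>2 < 4 * \<epsilon> * \<mu>"
    using n_pos L_pos by (simp add: field_simps)
  define Q where "Q = (\<Sum>i\<in>UNIV. (g $ i)\<^sup>2)"
  define S where "S = (\<Sum>i\<in>UNIV. \<bar>g $ i\<bar>)"
  have Q_norm: "Q = (norm g)\<^sup>2"
    unfolding Q_def power2_norm_eq_inner inner_vec_def by (simp add: power2_eq_square)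
  have S2: "S\<^sup>2 \<le> Q * n"
    using sum_squared_le_sum_of_squares[of "\<lambda>i. \<bar>g $ i\<bar>" UNIV]
    unfolding S_def Q_def n_def by simp
  have Q_big: "Q > 2 * \<mu> * \<epsilon>"
  proof -
    have lo: "f xstar \<ge> f x + g \<bullet> (xstar - x) + \<mu> / 2 * (norm (xstar - x))\<^sup>2"
      unfolding g_def by (rule sc_lower[OF grad strongly_convex])
    have "g \<bullet> (xstar - x) \<ge> - (norm g * norm (xstar - x))"
      using norm_cauchy_schwarz[of "-g" "xstar - x"] by simp
    moreover have "- (norm g * norm (xstar - x)) + \<mu> / 2 * (norm (xstar - x))\<^sup>2 \<ge> - (norm g)\<^sup>2 / (2 * \<mu>)"
    proof -
      have "0 \<le> (\<mu> * norm (xstar - x) - norm g)\<^sup>2" by simp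
      hence "0 \<le> (\<mu> * norm (xstar - x) - norm g)\<^sup>2 / (2 * \<mu>)" using mu_pos by simp
      thus ?thesis using mu_pos by (simp add: field_simps power2_eq_square)
    qed
    ultimately have "f x - f xstar \<le> (norm g)\<^sup>2 / (2 * \<mu>)" using lo by linarith
    with gap have "\<epsilon> < Q / (2 * \<mu>)" unfolding Q_norm by linarith
    thus ?thesis using mu_pos by (simp add: field_simps)
  qed
  have key: "L * \<alpha> * S / 2 < Q"
  proof -
    have S0: "S \<ge> 0" unfolding S_def by (simp add: sum_nonneg)
    have Q0: "Q > 0" using Q_big mu_pos eps_pos by (smt (verit) mult_pos_pos)
    have "(L * \<alpha> * S / 2)\<^sup>2 = L\<^sup>2 * \<alpha>\<^sup>2 * S\<^sup>2 / 4" by (simp add: power_mult_distrib power_divide)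
    also have "\<dots> \<le> L\<^sup>2 * \<alpha>\<^sup>2 * (Q * n) / 4"
      using S2 by (intro divide_right_mono mult_left_mono) auto
    also have "\<dots> = (L\<^sup>2 * n * \<alpha>\<^sup>2) * Q / 4" by simp
    also have "\<dots> < (4 * \<epsilon> * \<mu>) * Q / 4"
      using a2' Q0 by (intro divide_strict_right_mono mult_strict_right_mono) auto
    also have "\<dots> = (\<epsilon> * \<mu>) * Q" by simp
    also have "\<dots> < Q * Q" using Q_big Q0 mult_pos_pos[OF eps_pos mu_pos] by (intro mult_strict_right_mono) (auto simp: algebra_simps)
    finally have "(L * \<alpha> * S / 2)\<^sup>2 < Q\<^sup>2" by (simp add: power2_eq_square)
    thus ?thesis using Q0 by (smt (verit) power2_eq_square mult_mono L_pos alpha_pos S0 power_strict_mono)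
  qed
  have mgd: "mgd_step grad \<alpha> \<eta> x = map_pmf h P"
    unfolding mgd_step_def h_def P_def p_def g_def by simp
  have finP: "finite (set_pmf P)" by (rule finite_subset[OF subset_UNIV]) simp
  have int: "integrable (measure_pmf P) F" for F :: "('n \<Rightarrow> bool) \<Rightarrow> real"
    by (rule integrable_measure_pmf_finite[OF finP])
  have pw: "f (h \<Delta>) \<le> f x + (\<Sum>i\<in>UNIV. c i (\<Delta> i))" for \<Delta>
  proof -
    have d: "h \<Delta> - x = (\<chi> i. - (\<alpha> * sgn (g $ i) * (if \<Delta> i then 1 else 0)))"
      unfolding h_def by (simp add: vec_eq_iff)
    have sg: "g $ i * sgn (g $ i) = \<bar>g $ i\<bar>" for i by (simp add: sgn_if)
    have ip: "g \<bullet> (h \<Delta> - x) = (\<Sum>i\<in>UNIV. - \<alpha> * \<bar>g $ i\<bar> * (if \<Delta> i then 1 else 0))"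
      unfolding d inner_vec_def
      by (intro sum.cong refl) (simp add: algebra_simps flip: sg)
    have nr: "(norm (h \<Delta> - x))\<^sup>2 \<le> (\<Sum>i\<in>UNIV. \<alpha>\<^sup>2 * (if \<Delta> i then 1 else 0))"
      unfolding power2_norm_eq_inner d inner_vec_def
      by (intro sum_mono) (auto simp: sgn_if power2_eq_square)
    have "f (h \<Delta>) \<le> f x + g \<bullet> (h \<Delta> - x) + L / 2 * (norm (h \<Delta> - x))\<^sup>2"
      unfolding g_def by (rule descent[OF grad lipschitz])
    also have "\<dots> \<le> f x + g \<bullet> (h \<Delta> - x) + L / 2 * (\<Sum>i\<in>UNIV. \<alpha>\<^sup>2 * (if \<Delta> i then 1 else 0))"
      using nr L_nonneg by (intro add_left_mono mult_left_mono) auto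
    also have "\<dots> = f x + (\<Sum>i\<in>UNIV. c i (\<Delta> i))"
      unfolding ip c_def by (simp add: sum_distrib_left flip: sum.distrib add.assoc) (intro sum.cong refl, simp)
    finally show ?thesis .
  qed
  have Ec: "measure_pmf.expectation P (\<lambda>\<Delta>. c i (\<Delta> i)) = c i True * p i" for i
  proof -
    have "measure_pmf.expectation P (\<lambda>\<Delta>. c i (\<Delta> i)) = measure_pmf.expectation (map_pmf (\<lambda>\<Delta>. \<Delta> i) P) (c i)"
      by simp
    also have "map_pmf (\<lambda>\<Delta>. \<Delta> i) P = bernoulli_pmf (p i)"
      unfolding P_def by (subst Pi_pmf_component) auto
    finally show ?thesis using p01[of i] by (simp add: c_def)
  qed
  have "measure_pmf.expectation (mgd_step grad \<alpha> \<eta> x) f = measure_pmf.expectation P (\<lambda>\<Delta>. f (h \<Delta>))"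
    unfolding mgd by simp
  also have "\<dots> \<le> measure_pmf.expectation P (\<lambda>\<Delta>. f x + (\<Sum>i\<in>UNIV. c i (\<Delta> i)))"
    by (intro integral_mono int pw)
  also have "\<dots> = f x + (\<Sum>i\<in>UNIV. c i True * p i)"
    by (simp add: integral_add int integral_sum Ec)
  also have "(\<Sum>i\<in>UNIV. c i True * p i) = \<alpha> / \<eta> * (L * \<alpha> * S / 2 - Q)"
  proof -
    have "(\<Sum>i\<in>UNIV. c i True * p i) = (\<Sum>i\<in>UNIV. \<alpha> / \<eta> * (L * \<alpha> / 2 * \<bar>g $ i\<bar> - (g $ i)\<^sup>2))"
      unfolding c_def p_eq using eta_pos
      by (intro sum.cong refl) (simp add: field_simps power2_eq_square)
    also have "\<dots> = \<alpha> / \<eta> * (L * \<alpha> * S / 2 - Q)"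
      unfolding S_def Q_def sum_distrib_left[symmetric] sum_subtractf by (simp add: sum_distrib_left mult.assoc sum_divide_distrib[symmetric])
    finally show ?thesis .
  qed
  also have "f x + \<alpha> / \<eta> * (L * \<alpha> * S / 2 - Q) < f x"
  proof -
    have "L * \<alpha> * S / 2 - Q < 0" using key by simp
    hence "\<alpha> / \<eta> * (L * \<alpha> * S / 2 - Q) < 0"
      using alpha_pos eta_pos by (intro mult_pos_neg) auto
    thus ?thesis by simp
  qed
  finally show ?thesis .
qed

end
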